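(* Let $\Omega\subset\mathbb{R}^n$ be open, let $p:\Omega\to[1,\infty]$ be measurable with $\frac1p\in\mathcal P^{\log}(\Omega)$, and let $\omega\in A_\infty$. Then there is a constant $C$ such that for all open balls $B\subset\mathbb{R}^n$, \[\omega(B)^{\frac1{p_B^+}-\frac1{p_B^-}}\le C.\]
   Context: A weight is a nonnegative locally integrable function $\omega$ on $\mathbb{R}^n$, $\omega(E):=\int_E\omega\,dx$. For $1<q<\infty$, $\omega\in A_q$ means $\sup_B|B|^{-q}\omega(B)\big(\int_B\omega^{-q'/q}dx\big)^{q-1}<\infty$ with $1/q+1/q'=1$, supremum over open balls; $\omega\in A_1$ means $M\omega\le C\omega$ a.e. ($M$ the Hardy–Littlewood maximal operator); $A_\infty:=\bigcup_{q\in[1,\infty)}A_q$. $p_B^+:=\operatorname{ess\,sup}_{x\in B\cap\Omega}p(x)$, $p_B^-:=\operatorname{ess\,inf}_{x\in B\cap\Omega}p(x)$, with $1/\infty:=0$. $\frac1p\in\mathcal P^{\log}(\Omega)$ means: (local log-Hölder continuity) there is $c_1>0$ with $\big|\frac1{p(x)}-\frac1{p(y)}\big|\le\frac{c_1}{\log(e+1/|x-y|)}$ for all $x,y\in\Omega$; and (log-Hölder decay) there exist $p_\infty\in[1,\infty]$ and $c_2>0$ with $\big|\frac1{p(x)}-\frac1{p_\infty}\big|\le\frac{c_2}{\log(e+|x|)}$ for all $x\in\Omega$. *)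

theory Defs
  imports "HOL-Analysis.Analysis" "HOL-Probability.Essential_Supremum"
begin

definition is_weight :: "('a::euclidean_space \<Rightarrow> real) \<Rightarrow> bool" where
  "is_weight w \<longleftrightarrow> (\<forall>x. 0 \<le> w x) \<and> (\<forall>K. compact K \<longrightarrow> set_integrable lebesgue K w)"

definition wmeas :: "('a::euclidean_space \<Rightarrow> real) \<Rightarrow> 'a set \<Rightarrow> real" where
  "wmeas w E = (\<integral>x\<in>E. w x \<partial>lebesgue)"

definition HL_max :: "('a::euclidean_space \<Rightarrow> real) \<Rightarrow> 'a \<Rightarrow> ennreal" where
  "HL_max f x = (SUP cr \<in> {(c, r). 0 < r \<and> x \<in> ball c r}.
      ennreal ((\<integral>y\<in>ball (fst cr) (snd cr). \<bar>f y\<bar> \<partial>lebesgue) / measure lebesgue (ball (fst cr) (snd cr))))"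

text \<open>Muckenhoupt class A_q, 1 < q < infinity, with q' = q/(q-1), so -q'/q = -1/(q-1).\<close>
definition A_q :: "real \<Rightarrow> ('a::euclidean_space \<Rightarrow> real) \<Rightarrow> bool" where
  "A_q q w \<longleftrightarrow> is_weight w \<and>
     (\<exists>K. \<forall>c r. 0 < r \<longrightarrow>
        (let B = ball c r;
             I = (\<integral>\<^sup>+ y. indicator B y * (if w y = 0 then \<infinity> else ennreal (w y powr (- 1 / (q - 1)))) \<partial>lebesgue)
         in I < \<infinity> \<and>
            measure lebesgue B powr (- q) * wmeas w B * (enn2real I) powr (q - 1) \<le> K))"

definition A_1 :: "('a::euclidean_space \<Rightarrow> real) \<Rightarrow> bool" where
  "A_1 w \<longleftrightarrow> is_weight w \<and> (\<exists>C. AE x in lebesgue. HL_max w x \<le> ennreal (C * w x))"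

definition A_infty :: "('a::euclidean_space \<Rightarrow> real) \<Rightarrow> bool" where
  "A_infty w \<longleftrightarrow> A_1 w \<or> (\<exists>q. 1 < q \<and> A_q q w)"

definition essinf :: "'a measure \<Rightarrow> ('a \<Rightarrow> ereal) \<Rightarrow> ereal" where
  "essinf M f = Sup {z. AE x in M. z \<le> f x}"

definition p_plus :: "'a::euclidean_space set \<Rightarrow> ('a \<Rightarrow> ereal) \<Rightarrow> 'a set \<Rightarrow> ereal" where
  "p_plus \<Omega> p B = esssup (restrict_space lebesgue (B \<inter> \<Omega>)) p"

definition p_minus :: "'a::euclidean_space set \<Rightarrow> ('a \<Rightarrow> ereal) \<Rightarrow> 'a set \<Rightarrow> ereal" where
  "p_minus \<Omega> p B = essinf (restrict_space lebesgue (B \<inter> \<Omega>)) p"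

text \<open>1/t for t in [1,infinity] as a real number, with 1/infinity = 0.\<close>
definition recip :: "ereal \<Rightarrow> real" where
  "recip t = real_of_ereal (inverse t)"

definition P_log :: "'a::euclidean_space set \<Rightarrow> ('a \<Rightarrow> ereal) \<Rightarrow> bool" where
  "P_log \<Omega> p \<longleftrightarrow>
     (\<exists>c1>0. \<forall>x\<in>\<Omega>. \<forall>y\<in>\<Omega>. \<bar>recip (p x) - recip (p y)\<bar> \<le> c1 / ln (exp 1 + 1 / norm (x - y))) \<and>
     (\<exists>p_inf c2. 1 \<le> p_inf \<and> 0 < c2 \<and>
        (\<forall>x\<in>\<Omega>. \<bar>recip (p x) - recip p_inf\<bar> \<le> c2 / ln (exp 1 + norm x)))"

end

theory Submission
  imports Defs
begin


lemma ball_meas: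
  fixes c :: "'a::euclidean_space"
  assumes "0 < r"
  shows "measure lebesgue (ball c r) = r ^ DIM('a) * measure lebesgue (ball (0::'a) 1)"
    and "0 < measure lebesgue (ball (0::'a) 1)"
    and "0 < measure lebesgue (ball c r)"
    and "emeasure lebesgue (ball c r) < \<infinity>"
proof -
  show 1: "measure lebesgue (ball c r) = r ^ DIM('a) * measure lebesgue (ball (0::'a) 1)"
    using content_ball_conv_unit_ball[of r c] assms by (simp add: measure_completion)
  show 2: "0 < measure lebesgue (ball (0::'a) 1)"
    using content_ball_pos[of "1::real" "0::'a"] by (simp add: measure_completion)
  show "0 < measure lebesgue (ball c r)" using 1 2 assms by simp
  show "emeasure lebesgue (ball c r) < \<infinity>"
    using emeasure_lborel_ball_finite[of c r] by (simp add: emeasure_completion less_top)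
qed

lemma weight_int:
  assumes "is_weight w"
  shows "set_integrable lebesgue (ball c r) w"
proof -
  have "set_integrable lebesgue (cball c r) w" using assms unfolding is_weight_def by auto
  then show ?thesis by (rule set_integrable_subset) (auto)
qed

lemma wmeas_nonneg: "is_weight w \<Longrightarrow> 0 \<le> wmeas w (ball c r)"
  unfolding wmeas_def is_weight_def
  unfolding set_lebesgue_integral_def by (auto intro!: integral_nonneg_AE)

lemma wmeas_mono:
  assumes "is_weight w" "ball c r \<subseteq> ball c' r'"
  shows "wmeas w (ball c r) \<le> wmeas w (ball c' r')"
  unfolding wmeas_def
  using assms weight_int[OF assms(1)]
  unfolding set_lebesgue_integral_def set_integrable_def is_weight_def
  by (intro integral_mono) (auto split: split_indicator)



lemma recip_bounds: "1 \<le> t \<Longrightarrow> 0 \<le> recip t \<and> recip t \<le> 1"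
  unfolding recip_def by (cases t) (auto simp: field_simps)

lemma recip_gt: assumes "1 \<le> t" "0 < s" shows "s < recip t \<longleftrightarrow> t < ereal (1/s)"
  using assms unfolding recip_def
  by (cases t) (auto simp: field_simps)

lemma recip_lt: assumes "1 \<le> t" "0 < s" shows "recip t < s \<longleftrightarrow> ereal (1/s) < t"
  using assms unfolding recip_def
  by (cases t) (auto simp: field_simps)

lemma ess_gap:
  fixes p :: "'a::euclidean_space \<Rightarrow> ereal"
  assumes S: "open S" "S \<noteq> {}"
    and meas: "p \<in> borel_measurable (restrict_space lebesgue S)"
    and ge1: "\<forall>x\<in>S. 1 \<le> p x"
    and D: "\<forall>x\<in>S. \<forall>y\<in>S. recip (p x) - recip (p y) \<le> D"
  shows "recip (essinf (restrict_space lebesgue S) p) - recip (esssup (restrict_space lebesgue S) p) \<le> D"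
    and "essinf (restrict_space lebesgue S) p \<le> esssup (restrict_space lebesgue S) p"
    and "1 \<le> essinf (restrict_space lebesgue S) p"
proof -
  let ?M = "restrict_space lebesgue S"
  define mi where "mi = essinf ?M p"
  define ma where "ma = esssup ?M p"
  have Ssets: "S \<in> sets lebesgue" using S by auto
  have sp: "space ?M = S" by (simp add: space_restrict_space)
  obtain x0 e where "x0 \<in> S" "0 < e" "ball x0 e \<subseteq> S" using S by (meson ex_in_conv openE)
  then have "0 < emeasure lebesgue (ball x0 e)"
    using ball_meas(3)[of e x0] ball_meas(4)[of e x0]
    by (simp add: emeasure_eq_measure2)
  also have "\<dots> \<le> emeasure lebesgue S" using \<open>ball x0 e \<subseteq> S\<close> Ssets by (intro emeasure_mono) auto
  finally have posS: "emeasure ?M (space ?M) \<noteq> 0"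
    using Ssets by (simp add: sp emeasure_restrict_space)
  have AEc: "P" if "AE x in ?M. P" for P
    using that posS by (cases P) (auto simp: eventually_False ae_filter_eq_bot_iff)
  have AEall: "AE x in ?M. P x" if "\<forall>x\<in>S. P x" for P
    using that by (intro AE_I2) (auto simp: sp)
  have mi1: "1 \<le> mi" unfolding mi_def essinf_def
    by (rule Sup_upper) (auto intro!: AEall simp: ge1)
  have AEma: "AE x in ?M. p x \<le> ma" unfolding ma_def by (rule esssup_AE)
  have mima: "mi \<le> ma" unfolding mi_def essinf_def
  proof (rule Sup_least)
    fix z assume "z \<in> {z. AE x in ?M. z \<le> p x}"
    then have "AE x in ?M. z \<le> p x" by simp
    then have "AE x in ?M. z \<le> ma" using AEma by (auto elim: eventually_mono intro: order.trans)
    then show "z \<le> ma" by (rule AEc)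
  qed
  have F4: "\<exists>x\<in>S. p x < z" if "mi < z" for z
  proof (rule ccontr)
    assume "\<not> ?thesis"
    then have "AE x in ?M. z \<le> p x" by (intro AEall) (auto simp: not_less)
    then have "z \<le> mi" unfolding mi_def essinf_def by (intro Sup_upper) auto
    then show False using that by simp
  qed
  have F5: "\<exists>x\<in>S. z < p x" if "z < ma" for z
  proof (rule ccontr)
    assume "\<not> ?thesis"
    then have "AE x in ?M. p x \<le> z" by (intro AEall) (auto simp: not_less)
    then have "ma \<le> z" unfolding ma_def using meas by (intro esssup_I) auto
    then show False using that by simp
  qed
  have ma1: "1 \<le> ma" using mi1 mima by simp
  show "1 \<le> essinf ?M p" using mi1 mi_def by simp
  show "essinf ?M p \<le> esssup ?M p" using mima mi_def ma_def by simp
  show "recip (essinf ?M p) - recip (esssup ?M p) \<le> D"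
  proof (rule ccontr)
    define a where "a = recip mi"
    define b where "b = recip ma"
    assume "\<not> ?thesis"
    then have gap: "a - b > D" by (simp add: a_def b_def mi_def ma_def)
    define h where "h = (a - b - D) / 3"
    have h: "h > 0" using gap by (simp add: h_def)
    have b0: "0 \<le> b" using recip_bounds[OF ma1] b_def by simp
    define a' where "a' = a - h"
    define b' where "b' = b + h"
    have b'0: "0 < b'" using b0 h b'_def by simp
    have D0: "0 \<le> D" using D \<open>x0 \<in> S\<close> by fastforce
    have a'0: "0 < a'" using gap h b0 D0 unfolding a'_def h_def by simp
    have "a' < recip mi" using h a'_def a_def by simp
    then have "mi < ereal (1/a')" using recip_gt[OF mi1 a'0] by simp
    then obtain x where x: "x \<in> S" "p x < ereal (1/a')" using F4 by blast
    then have rx: "a' < recip (p x)" using recip_gt[OF _ a'0] ge1 by auto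
    have "recip ma < b'" using h b'_def b_def by simp
    then have "ereal (1/b') < ma" using recip_lt[OF ma1 b'0] by simp
    then obtain y where y: "y \<in> S" "ereal (1/b') < p y" using F5 by blast
    then have ry: "recip (p y) < b'" using recip_lt[OF _ b'0] ge1 by auto
    have "recip (p x) - recip (p y) \<le> D" using D x y by auto
    moreover have "a' - b' > D" using gap unfolding a'_def b'_def h_def by (simp add: field_simps)
    ultimately show False using rx ry by simp
  qed
qed


lemma set_int_const: "set_integrable lebesgue (ball (c::'a::euclidean_space) r) (\<lambda>_. v::real)"
  unfolding set_integrable_def
  using emeasure_lborel_ball_finite[of c r]
  by (intro integrable_indicator) (auto simp: emeasure_completion less_top)

lemma ball_ratio:
  fixes c :: "'a::euclidean_space"
  assumes "0 < r" "r \<le> R"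
  shows "measure lebesgue (ball c R) = (R/r)^DIM('a) * measure lebesgue (ball c r)"
  using ball_meas(1)[of r c] ball_meas(1)[of R c] assms
  by (simp add: power_divide)

lemma KL_A1:
  fixes w :: "'a::euclidean_space \<Rightarrow> real"
  assumes "A_1 w"
  shows "\<exists>K>0. \<forall>c r R. 0<r \<longrightarrow> r \<le> R \<longrightarrow> wmeas w (ball c R) \<le> K * (R/r)^DIM('a) * wmeas w (ball c r)"
proof -
  have W: "is_weight w" using assms unfolding A_1_def by auto
  have w0: "\<And>x. 0 \<le> w x" using W unfolding is_weight_def by auto
  obtain C where C: "AE x in lebesgue. HL_max w x \<le> ennreal (C * w x)" using assms unfolding A_1_def by auto
  define K where "K = max C 1"
  have K: "K > 0" by (simp add: K_def)
  have "wmeas w (ball c R) \<le> K * (R/r)^DIM('a) * wmeas w (ball c r)" if r: "0 < r" "r \<le> R" for c r R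
  proof -
    let ?B = "ball c r" and ?B' = "ball c R"
    define v where "v = wmeas w ?B' / measure lebesgue ?B'"
    have R: "0 < R" using r by simp
    have v0: "0 \<le> v" unfolding v_def using wmeas_nonneg[OF W] by simp
    have HL: "ennreal v \<le> HL_max w x" if "x \<in> ?B'" for x
    proof -
      have "(\<integral>y\<in>?B'. \<bar>w y\<bar> \<partial>lebesgue) = wmeas w ?B'"
        unfolding wmeas_def using w0 by simp
      then show ?thesis unfolding HL_max_def v_def
        by (intro SUP_upper2[where i="(c, R)"]) (use that R in auto)
    qed
    have AE1: "AE x in lebesgue. x \<in> ?B \<longrightarrow> v \<le> K * w x"
      using C
    proof eventually_elim
      case (elim x)
      show ?case
      proof
        assume "x \<in> ?B"
        then have "x \<in> ?B'" using r by auto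
        then have "ennreal v \<le> ennreal (C * w x)" using HL elim by (meson order.trans)
        then have "v \<le> max (C * w x) 0"
          by (cases "0 \<le> C * w x") (use v0 ennreal_le_iff in \<open>auto simp: ennreal_neg\<close>)
        also have "\<dots> \<le> K * w x" using w0[of x] unfolding K_def
          by (auto simp: max_def mult_right_mono mult_nonneg_nonneg)
        finally show "v \<le> K * w x" .
      qed
    qed
    have "(\<integral>y\<in>?B. v \<partial>lebesgue) \<le> (\<integral>y\<in>?B. K * w y \<partial>lebesgue)"
      using AE1 weight_int[OF W, of c r]
      by (intro set_integral_mono_AE) (auto intro: set_int_const set_integrable_mult_right)
    then have "measure lebesgue ?B * v \<le> K * wmeas w ?B"
      using ball_meas(4)[OF r(1), of c] unfolding wmeas_def
      by (simp add: set_integral_const)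
    then have "(R/r)^DIM('a) * (measure lebesgue ?B * v) \<le> (R/r)^DIM('a) * (K * wmeas w ?B)"
      using r by (intro mult_left_mono) auto
    moreover have "wmeas w ?B' = v * measure lebesgue ?B'"
      using ball_meas(3)[OF R, of c] unfolding v_def by simp
    then have "wmeas w ?B' = (R/r)^DIM('a) * (measure lebesgue ?B * v)"
      using ball_ratio[OF r, of c] by (simp add: ac_simps)
    ultimately show ?thesis by (simp add: ac_simps)
  qed
  then show ?thesis using K by blast
qed


lemma tangent:
  fixes a s t :: real
  assumes "0 < a" "0 < s" "0 < t"
  shows "s powr (-a) * (1+a) - a * s powr (-a-1) * t \<le> t powr (-a)"
proof -
  define u where "u = t / s"
  have u: "0 < u" using assms by (simp add: u_def)
  have t: "t = s * u" using assms by (simp add: u_def)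
  have "u powr (-a) = exp (-a * ln u)" using u by (simp add: powr_def)
  also have "\<dots> \<ge> 1 + (-a * ln u)" by (rule exp_ge_add_one_self)
  finally have "1 - a * ln u \<le> u powr (-a)" by simp
  moreover have "a * ln u \<le> a * (u - 1)" using u assms by (intro mult_left_mono ln_le_minus_one) auto
  ultimately have key: "(1+a) - a * u \<le> u powr (-a)" by (simp add: algebra_simps)
  have "s powr (-a-1) = s powr (-a) / s" using assms by (simp add: powr_diff)
  then have "s powr (-a-1) * t = s powr (-a) * u"
    using assms by (simp add: t)
  moreover have "t powr (-a) = s powr (-a) * u powr (-a)"
    using assms u by (simp add: t powr_mult)
  ultimately have "s powr (-a) * (1+a) - a * s powr (-a-1) * t = s powr (-a) * ((1+a) - a*u)"
    "t powr (-a) = s powr (-a) * u powr (-a)"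
    by (simp_all add: algebra_simps)
  then show ?thesis using key by (simp add: mult_left_mono)
qed

lemma int_le_nn:
  fixes f :: "'b \<Rightarrow> real"
  assumes "integrable M f"
  shows "ennreal (integral\<^sup>L M f) \<le> (\<integral>\<^sup>+x. ennreal (f x) \<partial>M)"
proof (cases "(\<integral>\<^sup>+x. ennreal (f x) \<partial>M) = \<infinity>")
  case False
  define r where "r = enn2real (\<integral>\<^sup>+x. ennreal (f x) \<partial>M)"
  have eq: "(\<integral>\<^sup>+x. ennreal (f x) \<partial>M) = ennreal r" using False unfolding r_def
    by (simp add: less_top ennreal_enn2real)
  have "integral\<^sup>L M f \<le> r" using eq by (intro integral_real_bounded) (auto simp: r_def)
  then show ?thesis using eq by (simp add: ennreal_leI)
qed simp

lemma J:
  fixes w :: "'a::euclidean_space \<Rightarrow> real"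
  assumes W: "is_weight w" and q: "1 < q" and s: "0 < s"
  shows "ennreal (measure lebesgue (ball c r) * s powr (-(1/(q-1))) * (1 + 1/(q-1))
            - 1/(q-1) * s powr (-(1/(q-1))-1) * wmeas w (ball c r))
       \<le> (\<integral>\<^sup>+ y. indicator (ball c r) y * (if w y = 0 then \<infinity> else ennreal (w y powr (- 1 / (q - 1)))) \<partial>lebesgue)"
proof -
  define a where "a = 1/(q-1)"
  have a: "0 < a" using q by (simp add: a_def)
  have aa: "- 1 / (q - 1) = -a" by (simp add: a_def)
  define h where "h y = s powr (-a) * (1+a) - a * s powr (-a-1) * w y" for y
  let ?B = "ball c r"
  have fin: "emeasure lebesgue ?B < \<infinity>" using emeasure_lborel_ball_finite[of c r]
    by (simp add: emeasure_completion less_top)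
  have si: "set_integrable lebesgue ?B h" unfolding h_def
    using weight_int[OF W, of c r]
    by (intro set_integral_diff(1) set_int_const set_integrable_mult_right)
  have "(\<integral>y\<in>?B. h y \<partial>lebesgue) = measure lebesgue ?B * (s powr (-a) * (1+a)) - a * s powr (-a-1) * wmeas w ?B"
    unfolding h_def wmeas_def
    using weight_int[OF W, of c r] fin
    by (subst set_integral_diff(2)) (auto intro: set_int_const set_integrable_mult_right simp: set_integral_const algebra_simps)
  then have ival: "integral\<^sup>L lebesgue (\<lambda>y. indicator ?B y * h y) = measure lebesgue ?B * s powr (-a) * (1+a) - a * s powr (-a-1) * wmeas w ?B"
    unfolding set_lebesgue_integral_def by (simp add: ac_simps)
  have iint: "integrable lebesgue (\<lambda>y. indicator ?B y * h y)" using si unfolding set_integrable_def by simp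
  have ptw: "ennreal (indicator ?B y * h y) \<le> indicator ?B y * (if w y = 0 then \<infinity> else ennreal (w y powr (-a)))" for y
  proof (cases "y \<in> ?B")
    case True
    show ?thesis
    proof (cases "w y = 0")
      case False
      then have "0 < w y" using W unfolding is_weight_def by (metis less_eq_real_def)
      then have "h y \<le> w y powr (-a)" unfolding h_def using tangent[OF a s] by blast
      then show ?thesis using True False by (simp add: ennreal_leI)
    qed (use True in simp)
  qed simp
  have "ennreal (integral\<^sup>L lebesgue (\<lambda>y. indicator ?B y * h y)) \<le> (\<integral>\<^sup>+y. ennreal (indicator ?B y * h y) \<partial>lebesgue)"
    by (rule int_le_nn[OF iint])
  also have "\<dots> \<le> (\<integral>\<^sup>+ y. indicator ?B y * (if w y = 0 then \<infinity> else ennreal (w y powr (-a))) \<partial>lebesgue)"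
    by (intro nn_integral_mono ptw)
  finally show ?thesis unfolding ival aa by (simp add: a_def)
qed


lemma KL_Aq:
  fixes w :: "'a::euclidean_space \<Rightarrow> real"
  assumes Aq: "A_q q w" and q: "1 < q"
  shows "\<exists>K>0. \<forall>c r R. 0<r \<longrightarrow> r \<le> R \<longrightarrow> wmeas w (ball c R) \<le> K * ((R/r)^DIM('a)) powr q * wmeas w (ball c r)"
proof -
  have W: "is_weight w" using Aq unfolding A_q_def by auto
  define g where "g y = (if w y = 0 then \<infinity> else ennreal (w y powr (- 1 / (q - 1))))" for y
  define IB where "IB c r = (\<integral>\<^sup>+ y. indicator (ball c r) y * g y \<partial>lebesgue)" for c r
  obtain K0 where K0: "\<And>c r. 0 < r \<Longrightarrow> IB c r < \<infinity> \<and>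
      measure lebesgue (ball c r) powr (- q) * wmeas w (ball c r) * (enn2real (IB c r)) powr (q - 1) \<le> K0"
  proof -
    from Aq obtain K1 where K1: "\<forall>c r. 0 < r \<longrightarrow> (let B = ball c r; I = (\<integral>\<^sup>+ y. indicator B y * (if w y = 0 then \<infinity> else ennreal (w y powr (- 1 / (q - 1)))) \<partial>lebesgue)
         in I < \<infinity> \<and> measure lebesgue B powr (- q) * wmeas w B * (enn2real I) powr (q - 1) \<le> K1)"
      unfolding A_q_def by blast
    show ?thesis
      by (rule that[of K1]) (use K1 in \<open>simp add: Let_def IB_def g_def\<close>)
  qed
  define K where "K = max K0 1"
  have K: "0 < K" by (simp add: K_def)
  define a where "a = 1/(q-1)"
  have a: "0 < a" using q by (simp add: a_def)
  have "wmeas w (ball c R) \<le> K * ((R/r)^DIM('a)) powr q * wmeas w (ball c r)" if r: "0 < r" "r \<le> R" for c r R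
  proof -
    have R: "0 < R" using r by simp
    define mB where "mB = measure lebesgue (ball c r)"
    define mB' where "mB' = measure lebesgue (ball c R)"
    have mB: "0 < mB" using ball_meas(3)[OF r(1)] by (simp add: mB_def)
    have mB': "0 < mB'" using ball_meas(3)[OF R] by (simp add: mB'_def)
    have ratio: "mB' = (R/r)^DIM('a) * mB" unfolding mB_def mB'_def by (rule ball_ratio[OF r])
    define om where "om = wmeas w (ball c r)"
    define om' where "om' = wmeas w (ball c R)"
    have om0: "0 \<le> om" "0 \<le> om'" unfolding om_def om'_def using wmeas_nonneg[OF W] by auto
    have sub: "ball c r \<subseteq> ball c R" using r by auto
    have IBmono: "IB c r \<le> IB c R" unfolding IB_def
      by (intro nn_integral_mono) (use sub in \<open>auto split: split_indicator\<close>)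
    have finR: "IB c R < \<infinity>" using K0[OF R] by simp
    then have finr: "IB c r < \<infinity>" using IBmono by (meson le_less_trans)
    define Ib where "Ib = enn2real (IB c r)"
    define Ib' where "Ib' = enn2real (IB c R)"
    have IbE: "IB c r = ennreal Ib" unfolding Ib_def using finr by (simp add: ennreal_enn2real less_top)
    have IbE': "IB c R = ennreal Ib'" unfolding Ib'_def using finR by (simp add: ennreal_enn2real less_top)
    have Ib0: "0 \<le> Ib" by (simp add: Ib_def)
    have Ible: "Ib \<le> Ib'" using IBmono finR unfolding Ib_def Ib'_def by (simp add: enn2real_mono)
    have Jr: "ennreal (mB * s powr (-a) * (1 + a) - a * s powr (-a-1) * om) \<le> ennreal Ib" if "0 < s" for s
      using J[OF W q that, of c r] IbE unfolding IB_def g_def mB_def om_def a_def by simp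
    have ompos: "0 < om"
    proof (rule ccontr)
      assume "\<not> 0 < om"
      then have om00: "om = 0" using om0 by simp
      define t where "t = (Ib + 1) / mB"
      have t: "0 < t" using mB Ib0 by (simp add: t_def)
      define s where "s = t powr (-(q-1))"
      have s: "0 < s" using t by (simp add: s_def)
      have "s powr (-a) = t powr ((q-1) * a)" using t by (simp add: s_def powr_powr) (simp add: algebra_simps)
      also have "(q-1) * a = 1" using q by (simp add: a_def)
      finally have st: "s powr (-a) = t" using t by simp
      have "ennreal (mB * t * (1 + a)) \<le> ennreal Ib" using Jr[OF s] st om00 by simp
      then have "mB * t * (1 + a) \<le> Ib" using Ib0 by (simp add: ennreal_le_iff)
      moreover have "mB * t = Ib + 1" using mB by (simp add: t_def)
      ultimately have "(Ib + 1) * (1 + a) \<le> Ib" by simp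
      then show False using a Ib0 by (simp add: algebra_simps) (smt (verit) mult_nonneg_nonneg)
    qed
    define s where "s = om / mB"
    have s: "0 < s" using ompos mB by (simp add: s_def)
    have "s powr (-a-1) = s powr (-a) / s" using s by (simp add: powr_diff)
    then have "a * s powr (-a-1) * om = a * s powr (-a) * mB" using s mB ompos by (simp add: s_def field_simps)
    then have "mB * s powr (-a) * (1 + a) - a * s powr (-a-1) * om = mB * s powr (-a)"
      by (simp add: algebra_simps) (metis mult.commute)
    then have "ennreal (mB * s powr (-a)) \<le> ennreal Ib" using Jr[OF s] by simp
    then have L: "mB * s powr (-a) \<le> Ib" using Ib0 by (simp add: ennreal_le_iff)
    define L where "L = mB * s powr (-a)"
    have Lpos: "0 < L" using mB s by (simp add: L_def)
    have LI: "L \<le> Ib'" using L Ible by (simp add: L_def)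
    have Aq': "mB' powr (-q) * om' * Ib' powr (q-1) \<le> K" using K0[OF R, of c] unfolding mB'_def om'_def Ib'_def K_def
      by (meson max.coboundedI1)
    have "om' * L powr (q-1) \<le> om' * Ib' powr (q-1)"
      using LI Lpos q om0 by (intro mult_left_mono powr_mono2) auto
    also have "\<dots> = mB' powr q * (mB' powr (-q) * om' * Ib' powr (q-1))"
      using mB' by (simp add: powr_minus field_simps)
    also have "\<dots> \<le> mB' powr q * K" using Aq' by (intro mult_left_mono) auto
    finally have main: "om' * L powr (q-1) \<le> mB' powr q * K" .
    have "L powr (q-1) = mB powr (q-1) * (s powr (-a)) powr (q-1)"
      using mB s by (simp add: L_def powr_mult)
    also have "(s powr (-a)) powr (q-1) = s powr (-1)" using q s by (simp add: powr_powr a_def)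
    also have "mB powr (q-1) * s powr (-1) = mB powr q / om"
      using mB ompos by (simp add: s_def powr_minus powr_diff field_simps)
    finally have "om' * (mB powr q / om) \<le> mB' powr q * K" using main by simp
    then have "om' \<le> K * (mB' powr q / mB powr q) * om"
      using mB ompos by (simp add: field_simps)
    also have "mB' powr q / mB powr q = ((R/r)^DIM('a)) powr q"
      using mB by (simp add: ratio powr_divide[symmetric])
    finally show ?thesis unfolding om'_def om_def .
  qed
  then show ?thesis using K by blast
qed


lemma prod_bound:
  fixes d c X L :: real
  assumes "1 \<le> X" "0 \<le> d" "d \<le> c / X" "0 < c" "L \<le> 1 + X"
  shows "d * L \<le> 2 * c"
proof -
  have "d * L \<le> d * (1 + X)" using assms by (intro mult_left_mono) auto
  also have "\<dots> \<le> (c / X) * (1 + X)" using assms by (intro mult_right_mono) auto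
  also have "\<dots> = c / X + c" using assms by (simp add: field_simps)
  also have "c / X \<le> c" using assms by (simp add: divide_le_eq)
  finally show ?thesis by simp
qed

lemma ln_ge1: "0 \<le> (y::real) \<Longrightarrow> 1 \<le> ln (exp 1 + y)"
proof -
  assume y: "0 \<le> y"
  have p: "0 < exp 1 + y" using y exp_gt_zero[of "1::real"] by linarith
  have "ln (exp 1) \<le> ln (exp 1 + y)" using y p by (subst ln_le_cancel_iff) auto
  then show ?thesis by simp
qed

lemma delta_ln:
  fixes r nc d c1 c2 :: real
  assumes r: "0 < r" and nc: "0 \<le> nc" and d: "0 \<le> d" "d \<le> 1" and c: "0 < c1" "0 < c2"
    and d1: "d \<le> c1 / ln (exp 1 + 1/(2*r))"
    and d2: "nc > 2*r+1 \<Longrightarrow> d \<le> 2*c2 / ln (exp 1 + nc / 2)"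
  shows "d * ln ((r + nc + 1)/r) \<le> 2 + 2*c1 + 4*c2"
proof -
  have e1: "1 \<le> exp (1::real) * 2" using one_le_exp_iff[of "1::real"] by linarith
  have pr: "0 < 1 + 1/r" using r by (intro add_pos_pos) auto
  have pn: "0 < 1 + nc" using nc by simp
  have pX: "0 < exp 1 + 1/(2*r)" using r by (intro add_pos_pos) auto
  define X where "X = ln (exp 1 + 1/(2*r))"
  have X1: "1 \<le> X" unfolding X_def using r by (intro ln_ge1) simp
  have "ln (1 + 1/r) \<le> ln (2 * (exp 1 + 1/(2*r)))"
    using r e1 by (subst ln_le_cancel_iff) (auto intro: add_pos_pos simp: field_simps)
  also have "\<dots> = ln 2 + X" unfolding X_def
    using pX by (subst ln_mult) auto
  also have "\<dots> \<le> 1 + X" using ln_2_less_1 by simp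
  finally have L1: "ln (1 + 1/r) \<le> 1 + X" .
  have A: "d * ln (1 + 1/r) \<le> 2 * c1" using prod_bound[OF X1 d(1) _ c(1) L1] d1 X_def by simp
  have l0: "0 \<le> ln (1 + 1/r)" using r by simp
  show ?thesis
  proof (cases "nc > 2*r+1")
    case False
    have "r + nc + 1 \<le> 3 * (r + 1)" using False by (simp add: algebra_simps)
    then have "(r + nc + 1)/r \<le> 3 * (r + 1) / r" using r by (intro divide_right_mono) auto
    also have "\<dots> = 3 * (1 + 1/r)" using r by (simp add: field_simps)
    finally have "(r + nc + 1)/r \<le> 3 * (1 + 1/r)" .
    then have "ln ((r + nc + 1)/r) \<le> ln (3 * (1 + 1/r))" using r nc pr
      by (subst ln_le_cancel_iff) (auto intro: add_pos_nonneg)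
    also have "\<dots> = ln 3 + ln (1 + 1/r)" using pr by (subst ln_mult) auto
    also have "ln (3::real) \<le> 2"
    proof -
      have "(3::real) \<le> exp 2" using exp_ge_add_one_self[of 2] by simp
      then show ?thesis by (metis exp_le_cancel_iff exp_ln zero_less_numeral)
    qed
    finally have "d * ln ((r + nc + 1)/r) \<le> d * (2 + ln (1 + 1/r))" using d by (intro mult_left_mono) auto
    also have "\<dots> = 2 * d + d * ln (1 + 1/r)" by (simp add: algebra_simps)
    also have "\<dots> \<le> 2 + 2 * c1" using A d by simp
    finally show ?thesis using c by simp
  next
    case True
    have pY: "0 < exp 1 + nc/2" using nc by (intro add_pos_nonneg) auto
    define Y where "Y = ln (exp 1 + nc / 2)"
    have Y1: "1 \<le> Y" unfolding Y_def using nc by (intro ln_ge1) simp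
    have "ln (1 + nc) \<le> ln (2 * (exp 1 + nc / 2))"
      using nc e1 by (subst ln_le_cancel_iff) (auto intro: add_pos_nonneg simp: field_simps)
    also have "\<dots> = ln 2 + Y" unfolding Y_def using pY by (subst ln_mult) auto
    also have "\<dots> \<le> 1 + Y" using ln_2_less_1 by simp
    finally have L2: "ln (1 + nc) \<le> 1 + Y" .
    have B: "d * ln (1 + nc) \<le> 2 * (2 * c2)"
      using prod_bound[OF Y1 d(1) _ _ L2, of "2*c2"] d2[OF True] Y_def c by simp
    have eqp: "(1 + 1/r) * (1 + nc) = (r + nc + 1 + r*nc)/r" using r by (simp add: field_simps)
    have "(r + nc + 1)/r \<le> (r + nc + 1 + r*nc)/r" using r nc by (intro divide_right_mono) auto
    then have le: "(r + nc + 1)/r \<le> (1 + 1/r) * (1 + nc)" using eqp by simp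
    have p1: "0 < (r + nc + 1)/r" using r nc by simp
    have p2: "0 < (1 + 1/r) * (1 + nc)" using pr pn by simp
    have "ln ((r + nc + 1)/r) \<le> ln ((1 + 1/r) * (1 + nc))" using le p1 p2 by simp
    also have "\<dots> = ln (1 + 1/r) + ln (1 + nc)" using pr pn by (subst ln_mult) auto
    finally have "d * ln ((r + nc + 1)/r) \<le> d * (ln (1 + 1/r) + ln (1 + nc))" using d by (intro mult_left_mono) auto
    also have "\<dots> = d * ln (1 + 1/r) + d * ln (1 + nc)" by (simp add: algebra_simps)
    finally show ?thesis using A B c by linarith
  qed
qed


lemma recip_anti: "1 \<le> s \<Longrightarrow> s \<le> t \<Longrightarrow> recip t \<le> recip s"
  unfolding recip_def
  by (cases s; cases t) (auto simp: field_simps)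

lemma powr_le_max: "0 < (x::real) \<Longrightarrow> 0 \<le> d \<Longrightarrow> d \<le> 1 \<Longrightarrow> x powr d \<le> max 1 x"
proof (cases "1 \<le> x")
  case True
  assume "0 < x" "0 \<le> d" "d \<le> 1"
  then have "x powr d \<le> x powr 1" using True by (intro powr_mono) auto
  then show ?thesis using True \<open>0 < x\<close> by simp
next
  case False
  assume "0 < x" "0 \<le> d" "d \<le> 1"
  then have "x powr d \<le> 1 powr d" using False by (intro powr_mono2) auto
  then show ?thesis by simp
qed

lemma KL:
  fixes w :: "'a::euclidean_space \<Rightarrow> real"
  assumes "A_infty w"
  shows "\<exists>K>0. \<exists>e\<ge>1. \<forall>c r R. 0<r \<longrightarrow> r \<le> R \<longrightarrow> wmeas w (ball c R) \<le> K * (R/r) powr e * wmeas w (ball c r)"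
proof (cases "A_1 w")
  case True
  obtain K where K: "K > 0" "\<forall>c r R. 0<r \<longrightarrow> r \<le> R \<longrightarrow> wmeas w (ball c R) \<le> K * (R/r)^DIM('a) * wmeas w (ball c r)"
    using KL_A1[OF True] by blast
  have "\<forall>c r R. 0<r \<longrightarrow> r \<le> R \<longrightarrow> wmeas w (ball c R) \<le> K * (R/r) powr (real DIM('a)) * wmeas w (ball c r)"
    using K(2) by (auto simp: powr_realpow)
  moreover have "(1::real) \<le> real DIM('a)" using DIM_positive by (simp add: Suc_le_eq)
  ultimately show ?thesis using K(1) by blast
next
  case False
  then obtain q where q: "1 < q" "A_q q w" using assms unfolding A_infty_def by blast
  obtain K where K: "K > 0" "\<forall>c r R. 0<r \<longrightarrow> r \<le> R \<longrightarrow> wmeas w (ball c R) \<le> K * ((R/r)^DIM('a)) powr q * wmeas w (ball c r)"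
    using KL_Aq[OF q(2) q(1)] by blast
  have "((R/r)^DIM('a)) powr q = (R/r) powr (real DIM('a) * q)" if "0 < r" "r \<le> R" for r R :: real
    using that by (simp add: powr_realpow[symmetric] powr_powr)
  then have "\<forall>c r R. 0<r \<longrightarrow> r \<le> R \<longrightarrow> wmeas w (ball c R) \<le> K * (R/r) powr (real DIM('a) * q) * wmeas w (ball c r)"
    using K(2) by auto
  moreover have "(1::real) \<le> real DIM('a) * q"
  proof -
    have d1: "(1::real) \<le> real DIM('a)" using DIM_positive[where 'a='a] by (simp add: Suc_le_eq)
    have "(1::real) * 1 \<le> real DIM('a) * q" using d1 q(1) by (intro mult_mono) auto
    then show ?thesis by simp
  qed
  ultimately show ?thesis using K(1) by blast
qed



lemma ball_sub1: "ball c r \<subseteq> ball (0::'a::euclidean_space) (r + norm c + 1)"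
proof
  fix x assume "x \<in> ball c r"
  then have h: "norm (c - x) < r" by (simp add: dist_norm)
  have "norm x \<le> norm c + norm (c - x)" using norm_triangle_ineq4[of c "c - x"] by simp
  then show "x \<in> ball 0 (r + norm c + 1)" using h by simp
qed

lemma ball_sub2: "0 < r \<Longrightarrow> ball (0::'a::euclidean_space) 1 \<subseteq> ball c (r + norm c + 1)"
proof
  fix x assume r: "0 < r" and "x \<in> ball (0::'a) 1"
  then have h: "norm x < 1" by simp
  have "norm (c - x) \<le> norm c + norm x" by (rule norm_triangle_ineq4)
  then show "x \<in> ball c (r + norm c + 1)" using h r by (simp add: dist_norm)
qed

theorem lemma5p4:
  fixes \<Omega> :: "'a::euclidean_space set" and p :: "'a \<Rightarrow> ereal" and w :: "'a \<Rightarrow> real"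
  assumes "open \<Omega>"
    and "p \<in> borel_measurable (restrict_space lebesgue \<Omega>)"
    and "\<forall>x\<in>\<Omega>. 1 \<le> p x"
    and "P_log \<Omega> p"
    and "A_infty w"
  shows "\<exists>C. \<forall>c r. 0 < r \<longrightarrow> ball c r \<inter> \<Omega> \<noteq> {} \<longrightarrow>
           wmeas w (ball c r) powr (recip (p_plus \<Omega> p (ball c r)) - recip (p_minus \<Omega> p (ball c r))) \<le> C"
proof -
  note Om = assms(1) and meas = assms(2) and ge1 = assms(3)
  have W: "is_weight w" using assms(5) unfolding A_infty_def A_1_def A_q_def by auto
  obtain K e where K: "0 < K" "1 \<le> e"
    and KL: "\<And>c r R. 0<r \<Longrightarrow> r \<le> R \<Longrightarrow> wmeas w (ball c R) \<le> K * (R/r) powr e * wmeas w (ball c r)"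
    using KL[OF assms(5)] by blast
  obtain c1 where c1: "c1 > 0"
    and loc: "\<forall>x\<in>\<Omega>. \<forall>y\<in>\<Omega>. \<bar>recip (p x) - recip (p y)\<bar> \<le> c1 / ln (exp 1 + 1 / norm (x - y))"
    using assms(4) unfolding P_log_def by blast
  obtain pinf c2 where c2: "0 < c2"
    and dec: "\<forall>x\<in>\<Omega>. \<bar>recip (p x) - recip pinf\<bar> \<le> c2 / ln (exp 1 + norm x)"
    using assms(4) unfolding P_log_def by blast
  define a where "a = wmeas w (ball 0 1)"
  define M where "M = 2 + 2*c1 + 4*c2"
  define C where "C = max 1 (max 1 (K/a) * exp (e*M))"
  have "wmeas w (ball c r) powr (recip (p_plus \<Omega> p (ball c r)) - recip (p_minus \<Omega> p (ball c r))) \<le> C"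
    if r: "0 < r" and ne: "ball c r \<inter> \<Omega> \<noteq> {}" for c r
  proof -
    define S where "S = ball c r \<inter> \<Omega>"
    have Sopen: "open S" using Om by (simp add: S_def open_Int)
    have Sne: "S \<noteq> {}" using ne by (simp add: S_def)
    have Smeas: "p \<in> borel_measurable (restrict_space lebesgue S)"
      using meas by (rule measurable_restrict_mono) (auto simp: S_def)
    have Sge1: "\<forall>x\<in>S. 1 \<le> p x" using ge1 by (auto simp: S_def)
    define d where "d = recip (p_minus \<Omega> p (ball c r)) - recip (p_plus \<Omega> p (ball c r))"
    have gap: "d \<le> D" if "\<forall>x\<in>S. \<forall>y\<in>S. recip (p x) - recip (p y) \<le> D" for D
      using ess_gap(1)[OF Sopen Sne Smeas Sge1 that] unfolding d_def p_plus_def p_minus_def S_def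
      by (simp add: Int_commute)
    have qb: "0 \<le> recip (p x) \<and> recip (p x) \<le> 1" if "x \<in> S" for x
      using recip_bounds Sge1 that by blast
    have Dp1: "\<forall>x\<in>S. \<forall>y\<in>S. recip (p x) - recip (p y) \<le> 1"
    proof (intro ballI)
      fix x y assume "x \<in> S" "y \<in> S"
      then show "recip (p x) - recip (p y) \<le> 1" using qb[of x] qb[of y] by linarith
    qed
    have e2: "essinf (restrict_space lebesgue S) p \<le> esssup (restrict_space lebesgue S) p"
      and e3: "1 \<le> essinf (restrict_space lebesgue S) p"
      using ess_gap(2,3)[OF Sopen Sne Smeas Sge1 Dp1] by auto
    have d0: "0 \<le> d"
      using recip_anti[OF e3 e2] unfolding d_def p_plus_def p_minus_def S_def
      by (simp add: Int_commute)
    have d1: "d \<le> 1" by (rule gap[OF Dp1])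
    define om where "om = wmeas w (ball c r)"
    have om0: "0 \<le> om" using wmeas_nonneg[OF W] by (simp add: om_def)
    have expo: "recip (p_plus \<Omega> p (ball c r)) - recip (p_minus \<Omega> p (ball c r)) = - d"
      by (simp add: d_def)
    have C1: "1 \<le> C" by (simp add: C_def)
    have "om powr (-d) \<le> C"
    proof (cases "om = 0")
      case True then show ?thesis using C1 by simp
    next
      case False
      then have ompos: "0 < om" using om0 by simp
      show ?thesis
      proof (cases "1 \<le> om")
        case True
        then have "om powr (-d) \<le> om powr 0" using d0 by (intro powr_mono) auto
        then show ?thesis using C1 ompos by simp
      next
        case False
        then have om1: "om < 1" by simp
        define nc where "nc = norm c"
        have nc: "0 \<le> nc" by (simp add: nc_def)
        define R where "R = r + nc + 1"
        have rR: "r \<le> R" using nc by (simp add: R_def)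
        have apos: "0 < a"
        proof (rule ccontr)
          assume "\<not> 0 < a"
          then have a0: "a = 0" using wmeas_nonneg[OF W, of 0 1] by (simp add: a_def)
          have "wmeas w (ball 0 R) \<le> K * (R/1) powr e * a"
            unfolding a_def using nc r by (intro KL) (auto simp: R_def)
          then have "wmeas w (ball 0 R) \<le> 0" using a0 by simp
          moreover have "om \<le> wmeas w (ball 0 R)" unfolding om_def
            by (rule wmeas_mono[OF W]) (use ball_sub1[of c r] in \<open>simp add: R_def nc_def\<close>)
          ultimately show False using ompos by simp
        qed
        define rho where "rho = R / r"
        have rho: "0 < rho" using r rR by (simp add: rho_def)
        have "a \<le> wmeas w (ball c R)" unfolding a_def
          by (rule wmeas_mono[OF W]) (use ball_sub2[of r c] r in \<open>simp add: R_def nc_def\<close>)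
        also have "\<dots> \<le> K * rho powr e * om" unfolding rho_def om_def using r rR by (intro KL) auto
        finally have low: "a \<le> K * rho powr e * om" .
        have inv: "1 / om \<le> (K/a) * rho powr e"
          using low apos ompos K by (simp add: field_simps)
        have "om powr (-d) = (1/om) powr d" using ompos by (simp add: powr_minus_divide powr_divide)
        also have "\<dots> \<le> ((K/a) * rho powr e) powr d"
          using inv ompos d0 by (intro powr_mono2) auto
        also have "\<dots> = (K/a) powr d * rho powr (e*d)"
          using K apos rho powr_mult[of "K/a" "rho powr e" d] by (simp add: powr_powr)
        finally have ch: "om powr (-d) \<le> (K/a) powr d * rho powr (e*d)" .
        have kb: "(K/a) powr d \<le> max 1 (K/a)" using K apos d0 d1 by (intro powr_le_max) auto
        have dD1: "d \<le> c1 / ln (exp 1 + 1/(2*r))"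
        proof (rule gap, intro ballI)
          fix x y assume x: "x \<in> S" and y: "y \<in> S"
          have pos0: "0 < c1 / ln (exp 1 + 1/(2*r))"
            using c1 ln_ge1[of "1/(2*r)"] r by simp
          show "recip (p x) - recip (p y) \<le> c1 / ln (exp 1 + 1/(2*r))"
          proof (cases "x = y")
            case True then show ?thesis using pos0 by simp
          next
            case False
            have xy: "norm (x - y) < 2*r"
            proof -
              have "norm (x - y) \<le> norm (x - c) + norm (c - y)" using norm_triangle_ineq[of "x - c" "c - y"] by simp
              moreover have "norm (x - c) < r" "norm (c - y) < r" using x y
                by (auto simp: S_def dist_norm norm_minus_commute)
              ultimately show ?thesis by simp
            qed
            have nxy: "0 < norm (x - y)" using False by simp
            have "1/(2*r) \<le> 1 / norm (x - y)" using xy nxy r by (intro divide_left_mono) (auto intro: mult_pos_pos)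
            then have l: "ln (exp 1 + 1/(2*r)) \<le> ln (exp 1 + 1 / norm (x - y))"
              using r nxy ln_ge1[of "1/(2*r)"]
              by (subst ln_le_cancel_iff) (auto intro: add_pos_nonneg add_pos_pos)
            have l1: "1 \<le> ln (exp 1 + 1/(2*r))" using r by (intro ln_ge1) simp
            have "recip (p x) - recip (p y) \<le> \<bar>recip (p x) - recip (p y)\<bar>" by simp
            also have "\<dots> \<le> c1 / ln (exp 1 + 1 / norm (x - y))" using loc x y by (auto simp: S_def)
            also have "\<dots> \<le> c1 / ln (exp 1 + 1/(2*r))" using l l1 c1 by (intro divide_left_mono) auto
            finally show ?thesis .
          qed
        qed
        have dD2: "d \<le> 2*c2 / ln (exp 1 + nc / 2)" if big: "nc > 2*r+1"
        proof (rule gap, intro ballI)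
          fix x y assume x: "x \<in> S" and y: "y \<in> S"
          have l1: "1 \<le> ln (exp 1 + nc/2)" using nc by (intro ln_ge1) simp
          have one: "\<bar>recip (p z) - recip pinf\<bar> \<le> c2 / ln (exp 1 + nc/2)" if z: "z \<in> S" for z
          proof -
            have "norm (c - z) < r" using z by (simp add: S_def dist_norm)
            moreover have "nc \<le> norm z + norm (c - z)" unfolding nc_def
              using norm_triangle_ineq[of z "c - z"] by simp
            ultimately have "nc / 2 \<le> norm z" using big by simp
            then have l: "ln (exp 1 + nc/2) \<le> ln (exp 1 + norm z)"
              using nc l1 by (subst ln_le_cancel_iff) (auto intro: add_pos_nonneg)
            have "\<bar>recip (p z) - recip pinf\<bar> \<le> c2 / ln (exp 1 + norm z)" using dec z by (auto simp: S_def)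
            also have "\<dots> \<le> c2 / ln (exp 1 + nc/2)" using l l1 c2 by (intro divide_left_mono) auto
            finally show ?thesis .
          qed
          have "recip (p x) - recip (p y) \<le> \<bar>recip (p x) - recip pinf\<bar> + \<bar>recip (p y) - recip pinf\<bar>" by linarith
          also have "\<dots> \<le> c2 / ln (exp 1 + nc/2) + c2 / ln (exp 1 + nc/2)" using one[OF x] one[OF y] by linarith
          finally show "recip (p x) - recip (p y) \<le> 2*c2 / ln (exp 1 + nc / 2)" by simp
        qed
        have dl: "d * ln ((r + nc + 1)/r) \<le> 2 + 2*c1 + 4*c2"
          by (rule delta_ln[OF r nc d0 d1 c1 c2 dD1 dD2])
        have rb: "rho powr (e*d) \<le> exp (e*M)"
        proof -
          have "rho powr (e*d) = exp (e * (d * ln rho))" using rho by (simp add: powr_def ac_simps)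
          also have "\<dots> \<le> exp (e * M)" using dl K(2) unfolding rho_def R_def M_def
            by (simp add: mult_left_mono)
          finally show ?thesis .
        qed
        have "om powr (-d) \<le> max 1 (K/a) * exp (e*M)"
          using ch kb rb by (meson mult_mono order.trans exp_ge_zero powr_ge_zero max.cobounded1 order_trans zero_le_one)
        then show ?thesis unfolding C_def by simp
      qed
    qed
    then show ?thesis using expo by (simp add: om_def)
  qed
  then show ?thesis by blast
qed

end
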